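(* Let $X=(X_1,\dots,X_p)$ be a jointly continuous random vector in $\mathbb{R}^p$, and let $a_1,\dots,a_{\mathcal{R}}\in\mathbb{C}$ be such that the set $\mathcal{S}'=\{|a_k|^2:k\in[\mathcal{R}]\}\cup\{a_k^Ha_\ell+a_ka_\ell^H:1\le k<\ell\le\mathcal{R}\}$ is rationally independent. Let $\mathcal{L}=\mathcal{S}_1\cup\mathcal{S}_2\cup\mathcal{S}_3$ (viewed as a family of reals), where $\mathcal{S}_1=\{X_i^2|a_k|^2:i\in[p],k\in[\mathcal{R}]\}$, $\mathcal{S}_2=\{X_iX_j|a_k|^2:1\le i<j\le p,k\in[\mathcal{R}]\}$, $\mathcal{S}_3=\{X_iX_j(a_k^Ha_\ell+a_ka_\ell^H):1\le i<j\le p,1\le k<\ell\le\mathcal{R}\}$. Then $\mathbb{P}(\mathcal{L}\text{ is rationally independent})=1$, where the probability is over the joint distribution of $X_1,\dots,X_p$.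
   Context: $x^H$ denotes the complex conjugate of $x\in\mathbb{C}$, so $a_k^Ha_\ell+a_ka_\ell^H\in\mathbb{R}$. A random vector in $\mathbb{R}^p$ is jointly continuous if it has a joint density with respect to Lebesgue measure. A finite family of reals $(x_k)$ is rationally independent if $\sum_kq_kx_k=0$ with $q_k\in\mathbb{Q}$ implies all $q_k=0$. *)

theory Defs
  imports "HOL-Probability.Probability"
begin

definition rat_indep :: "'i set \<Rightarrow> ('i \<Rightarrow> real) \<Rightarrow> bool" where
  "rat_indep I x \<longleftrightarrow>
     (\<forall>q. (\<forall>k\<in>I. q k \<in> \<rat>) \<longrightarrow> (\<Sum>k\<in>I. q k * x k) = 0 \<longrightarrow> (\<forall>k\<in>I. q k = 0))"

text \<open>Indices of S' (0-based: k < R, k < l < R).\<close>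
datatype sidx = T1 nat | T2 nat nat

definition Sidx :: "nat \<Rightarrow> sidx set" where
  "Sidx R = {T1 k | k. k < R} \<union> {T2 k l | k l. k < l \<and> l < R}"

fun Sfam :: "(nat \<Rightarrow> complex) \<Rightarrow> sidx \<Rightarrow> real" where
  "Sfam a (T1 k) = (cmod (a k))\<^sup>2"
| "Sfam a (T2 k l) = Re (cnj (a k) * a l + a k * cnj (a l))"

text \<open>Indices of L = S1 \<union> S2 \<union> S3 (0-based), viewed as an indexed family.\<close>
datatype lidx = L1 nat nat | L2 nat nat nat | L3 nat nat nat nat

definition Lidx :: "nat \<Rightarrow> nat \<Rightarrow> lidx set" where
  "Lidx p R = {L1 i k | i k. i < p \<and> k < R}
            \<union> {L2 i j k | i j k. i < j \<and> j < p \<and> k < R}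
            \<union> {L3 i j k l | i j k l. i < j \<and> j < p \<and> k < l \<and> l < R}"

fun Lfam :: "(nat \<Rightarrow> real) \<Rightarrow> (nat \<Rightarrow> complex) \<Rightarrow> lidx \<Rightarrow> real" where
  "Lfam x a (L1 i k) = (x i)\<^sup>2 * (cmod (a k))\<^sup>2"
| "Lfam x a (L2 i j k) = x i * x j * (cmod (a k))\<^sup>2"
| "Lfam x a (L3 i j k l) = x i * x j * Re (cnj (a k) * a l + a k * cnj (a l))"

end

theory Submission imports Defs "HOL-Computational_Algebra.Polynomial" begin

abbreviation PL :: "nat set \<Rightarrow> (nat \<Rightarrow> real) measure" where "PL I \<equiv> PiM I (\<lambda>_. lborel)"

lemma fub:
  fixes I :: "nat set"
  assumes fin: "finite I" and iI: "i \<in> I" and A: "A \<in> sets (PL I)"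
   and ae: "AE y in PL (I - {i}). AE t in lborel. y(i:=t) \<notin> A"
  shows "A \<in> null_sets (PL I)"
proof -
  interpret product_sigma_finite "\<lambda>_::nat. lborel::real measure" by standard
  have I: "I = insert i (I - {i})" using iI by auto
  have "emeasure (PL I) A = (\<integral>\<^sup>+ x. indicator A x \<partial>PL I)"
    using A by simp
  also have "\<dots> = (\<integral>\<^sup>+ y. (\<integral>\<^sup>+ t. indicator A (y(i:=t)) \<partial>lborel) \<partial>PL (I - {i}))"
    using product_nn_integral_insert[of "I - {i}" i "indicator A"] fin A I by simp
  also have "\<dots> = (\<integral>\<^sup>+ y. 0 \<partial>PL (I - {i}))"
  proof (rule nn_integral_cong_AE)
    show "AE y in PL (I - {i}). (\<integral>\<^sup>+ t. indicator A (y(i:=t)) \<partial>lborel) = 0"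
      using ae
    proof eventually_elim
      case (elim y)
      have "(\<integral>\<^sup>+ t. indicator A (y(i:=t)) \<partial>lborel) = (\<integral>\<^sup>+ (t::real). 0 \<partial>lborel)"
        using elim by (intro nn_integral_cong_AE) (auto simp: indicator_def elim!: AE_mp)
      then show ?case by simp
    qed
  qed
  finally show ?thesis using A by (auto intro!: null_setsI)
qed

lemma sum_upd_split:
  fixes b :: "nat \<Rightarrow> real"
  assumes "finite I" "j \<in> I"
  shows "(\<Sum>l\<in>I. b l * (y(j:=t)) l) = b j * t + (\<Sum>l\<in>I-{j}. b l * y l)"
proof -
  have "(\<Sum>l\<in>I. b l * (y(j:=t)) l) = b j * t + (\<Sum>l\<in>I-{j}. b l * (y(j:=t)) l)"
    using assms by (simp add: sum.remove)
  also have "(\<Sum>l\<in>I-{j}. b l * (y(j:=t)) l) = (\<Sum>l\<in>I-{j}. b l * y l)"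
    by (rule sum.cong) auto
  finally show ?thesis .
qed

lemma lin_null:
  fixes b :: "nat \<Rightarrow> real"
  assumes fin: "finite I" and j: "j \<in> I" and bj: "b j \<noteq> 0"
  shows "{y \<in> space (PL I). (\<Sum>l\<in>I. b l * y l) = 0} \<in> null_sets (PL I)"
proof (rule fub[OF fin j])
  show "{y \<in> space (PL I). (\<Sum>l\<in>I. b l * y l) = 0} \<in> sets (PL I)"
    by measurable
  show "AE y in PL (I - {j}). AE t in lborel. y(j:=t) \<notin> {y \<in> space (PL I). (\<Sum>l\<in>I. b l * y l) = 0}"
  proof (rule AE_I2)
    fix y
    show "AE t in lborel. y(j:=t) \<notin> {y \<in> space (PL I). (\<Sum>l\<in>I. b l * y l) = 0}"
    proof (rule AE_I')
      show "{- (\<Sum>l\<in>I-{j}. b l * y l) / b j} \<in> null_sets lborel"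
        by (rule finite_imp_null_set_lborel) simp
      show "{t \<in> space lborel. \<not> y(j:=t) \<notin> {y \<in> space (PL I). (\<Sum>l\<in>I. b l * y l) = 0}}
          \<subseteq> {- (\<Sum>l\<in>I-{j}. b l * y l) / b j}"
        using bj by (auto simp: sum_upd_split[OF fin j] field_simps simp del: fun_upd_apply)
    qed
  qed
qed

lemma quad_upd_split:
  fixes c :: "nat \<Rightarrow> nat \<Rightarrow> real"
  assumes fin: "finite I" and i: "i \<in> I"
  shows "(\<Sum>k\<in>I. \<Sum>l\<in>I. c k l * (y(i:=t)) k * (y(i:=t)) l)
    = c i i * t^2 + t * (\<Sum>l\<in>I-{i}. (c i l + c l i) * y l) + (\<Sum>k\<in>I-{i}. \<Sum>l\<in>I-{i}. c k l * y k * y l)"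
proof -
  let ?x = "y(i:=t)"
  have e1: "(\<Sum>l\<in>I. c k l * ?x k * ?x l) = c k i * ?x k * t + (\<Sum>l\<in>I-{i}. c k l * ?x k * y l)" for k
  proof -
    have "(\<Sum>l\<in>I. c k l * ?x k * ?x l) = c k i * ?x k * ?x i + (\<Sum>l\<in>I-{i}. c k l * ?x k * ?x l)"
      using fin i by (simp add: sum.remove del: fun_upd_apply)
    also have "(\<Sum>l\<in>I-{i}. c k l * ?x k * ?x l) = (\<Sum>l\<in>I-{i}. c k l * ?x k * y l)"
      by (rule sum.cong) auto
    finally show ?thesis by simp
  qed
  have "(\<Sum>k\<in>I. \<Sum>l\<in>I. c k l * ?x k * ?x l) = (\<Sum>k\<in>I. c k i * ?x k * t + (\<Sum>l\<in>I-{i}. c k l * ?x k * y l))"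
    by (simp only: e1)
  also have "\<dots> = (c i i * t * t + (\<Sum>l\<in>I-{i}. c i l * t * y l)) + (\<Sum>k\<in>I-{i}. c k i * ?x k * t + (\<Sum>l\<in>I-{i}. c k l * ?x k * y l))"
    using fin i by (simp add: sum.remove fun_upd_same del: fun_upd_apply)
  also have "(\<Sum>k\<in>I-{i}. c k i * ?x k * t + (\<Sum>l\<in>I-{i}. c k l * ?x k * y l)) = (\<Sum>k\<in>I-{i}. c k i * y k * t + (\<Sum>l\<in>I-{i}. c k l * y k * y l))"
    by (rule sum.cong) auto
  also have "\<dots> = (\<Sum>k\<in>I-{i}. c k i * y k * t) + (\<Sum>k\<in>I-{i}. \<Sum>l\<in>I-{i}. c k l * y k * y l)"
    by (simp add: sum.distrib)
  finally show ?thesis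
    by (simp add: power2_eq_square sum.distrib sum_distrib_left sum_distrib_right algebra_simps)
qed

lemma quad_null:
  fixes c :: "nat \<Rightarrow> nat \<Rightarrow> real"
  assumes fin: "finite I"
    and nz: "(\<exists>i\<in>I. c i i \<noteq> 0) \<or> (\<exists>i\<in>I. \<exists>j\<in>I. i \<noteq> j \<and> c i j + c j i \<noteq> 0)"
  shows "{x \<in> space (PL I). (\<Sum>k\<in>I. \<Sum>l\<in>I. c k l * x k * x l) = 0} \<in> null_sets (PL I)"
    (is "?Z \<in> _")
proof -
  have meas: "?Z \<in> sets (PL I)" by measurable
  show ?thesis
  proof (cases "\<exists>i\<in>I. c i i \<noteq> 0")
    case True
    then obtain i where i: "i \<in> I" and ci: "c i i \<noteq> 0" by blast
    show ?thesis
    proof (rule fub[OF fin i meas])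
      show "AE y in PL (I - {i}). AE t in lborel. y(i:=t) \<notin> ?Z"
      proof (rule AE_I2)
        fix y
        let ?B = "(\<Sum>l\<in>I-{i}. (c i l + c l i) * y l)"
        let ?C = "(\<Sum>k\<in>I-{i}. \<Sum>l\<in>I-{i}. c k l * y k * y l)"
        let ?P = "[:?C, ?B, c i i:]"
        have "?P \<noteq> 0" using ci by auto
        then have "finite {t. poly ?P t = 0}" by (rule poly_roots_finite)
        then have N: "{t. poly ?P t = 0} \<in> null_sets lborel" by (rule finite_imp_null_set_lborel)
        show "AE t in lborel. y(i:=t) \<notin> ?Z"
        proof (rule AE_I'[OF N])
          show "{t \<in> space lborel. \<not> y(i:=t) \<notin> ?Z} \<subseteq> {t. poly ?P t = 0}"
          proof
            fix t assume "t \<in> {t \<in> space lborel. \<not> y(i:=t) \<notin> ?Z}"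
            then have "(\<Sum>k\<in>I. \<Sum>l\<in>I. c k l * (y(i:=t)) k * (y(i:=t)) l) = 0" by blast
            then have "c i i * t^2 + t * ?B + ?C = 0" by (simp only: quad_upd_split[OF fin i])
            then show "t \<in> {t. poly ?P t = 0}" by (simp add: algebra_simps power2_eq_square)
          qed
        qed
      qed
    qed
  next
    case False
    then have diag: "\<forall>i\<in>I. c i i = 0" by blast
    with nz obtain i j where i: "i \<in> I" and j: "j \<in> I" and ij: "i \<noteq> j" and cij: "c i j + c j i \<noteq> 0"
      by blast
    let ?B = "\<lambda>y. (\<Sum>l\<in>I-{i}. (c i l + c l i) * y l)"
    have L: "{y \<in> space (PL (I-{i})). ?B y = 0} \<in> null_sets (PL (I-{i}))"
      by (rule lin_null) (use fin j ij cij in auto)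
    have "AE y in PL (I-{i}). ?B y \<noteq> 0"
      by (rule AE_I'[OF L]) auto
    then have "AE y in PL (I - {i}). AE t in lborel. y(i:=t) \<notin> ?Z"
    proof eventually_elim
      case (elim y)
      let ?C = "(\<Sum>k\<in>I-{i}. \<Sum>l\<in>I-{i}. c k l * y k * y l)"
      show "AE t in lborel. y(i:=t) \<notin> ?Z"
      proof (rule AE_I')
        show "{- ?C / ?B y} \<in> null_sets lborel"
          by (rule finite_imp_null_set_lborel) simp
        show "{t \<in> space lborel. \<not> y(i:=t) \<notin> ?Z} \<subseteq> {- ?C / ?B y}"
        proof
          fix t assume "t \<in> {t \<in> space lborel. \<not> y(i:=t) \<notin> ?Z}"
          then have "(\<Sum>k\<in>I. \<Sum>l\<in>I. c k l * (y(i:=t)) k * (y(i:=t)) l) = 0" by blast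
          then have "c i i * t^2 + t * ?B y + ?C = 0" by (simp only: quad_upd_split[OF fin i])
          then show "t \<in> {- ?C / ?B y}" using elim diag i by (simp add: field_simps)
        qed
      qed
    qed
    then show ?thesis by (rule fub[OF fin i meas])
  qed
qed

lemma dist_null:
  assumes d: "distributed M N Y f" and A: "A \<in> null_sets N"
  shows "AE x in M. Y x \<notin> A"
proof -
  have eq: "distr M N Y = density N f" and fm: "f \<in> borel_measurable N" and Ym: "Y \<in> measurable M N"
    using d by (auto simp: distributed_def)
  have "AE x in N. x \<notin> A" using A by (rule AE_not_in)
  then have "AE x in density N f. x \<notin> A"
    by (subst AE_density[OF fm]) (auto elim!: AE_mp)
  then have "AE x in distr M N Y. x \<notin> A" by (simp only: eq)
  moreover have "{x \<in> space N. x \<notin> A} \<in> sets N" using A by auto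
  ultimately show ?thesis using AE_distr_iff[OF Ym, of "\<lambda>x. x \<notin> A"] by simp
qed

fun sel :: "lidx \<Rightarrow> nat \<Rightarrow> nat \<Rightarrow> sidx \<Rightarrow> bool" where
  "sel (L1 i' k) i j s = (i = i' \<and> j = i' \<and> s = T1 k)"
| "sel (L2 i' j' k) i j s = (i = i' \<and> j = j' \<and> s = T1 k)"
| "sel (L3 i' j' k l) i j s = (i = i' \<and> j = j' \<and> s = T2 k l)"

fun key :: "lidx \<Rightarrow> nat \<times> nat \<times> sidx" where
  "key (L1 i k) = (i, i, T1 k)"
| "key (L2 i j k) = (i, j, T1 k)"
| "key (L3 i j k l) = (i, j, T2 k l)"

lemma finite_Sidx: "finite (Sidx R)"
proof -
  have "Sidx R \<subseteq> T1 ` {..<R} \<union> (\<lambda>(k,l). T2 k l) ` ({..<R} \<times> {..<R})"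
    by (auto simp: Sidx_def)
  then show ?thesis by (rule finite_subset) auto
qed

lemma finite_Lidx: "finite (Lidx p R)"
proof -
  have "Lidx p R \<subseteq> (\<lambda>(i,k). L1 i k) ` ({..<p} \<times> {..<R}) \<union> (\<lambda>(i,j,k). L2 i j k) ` ({..<p} \<times> {..<p} \<times> {..<R})
     \<union> (\<lambda>(i,j,k,l). L3 i j k l) ` ({..<p} \<times> {..<p} \<times> {..<R} \<times> {..<R})"
    by (auto simp: Lidx_def image_iff)
  then show ?thesis by (rule finite_subset) auto
qed

lemma sel_key:
  assumes "L \<in> Lidx p R"
  shows "sel L i j s \<longleftrightarrow> (i, j, s) = key L"
  using assms by (cases L) auto

lemma key_props:
  assumes "L \<in> Lidx p R" "key L = (i, j, s)"
  shows "i \<le> j" "j < p" "s \<in> Sidx R"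
  using assms by (cases L; auto simp: Lidx_def Sidx_def)+

lemma key_inj:
  assumes "L \<in> Lidx p R" "L' \<in> Lidx p R" "key L = key L'"
  shows "L = L'"
  using assms by (cases L; cases L'; auto simp: Lidx_def)

lemma delta3:
  fixes F :: "nat \<Rightarrow> nat \<Rightarrow> sidx \<Rightarrow> real"
  assumes "finite A" "finite B" "finite C" "i0 \<in> A" "j0 \<in> B" "s0 \<in> C"
  shows "(\<Sum>i\<in>A. \<Sum>j\<in>B. \<Sum>s\<in>C. if (i, j, s) = (i0, j0, s0) then F i j s else 0) = F i0 j0 s0"
proof -
  have "(\<Sum>i\<in>A. \<Sum>j\<in>B. \<Sum>s\<in>C. if (i, j, s) = (i0, j0, s0) then F i j s else 0)
     = (\<Sum>i\<in>A. if i = i0 then (\<Sum>j\<in>B. if j = j0 then (\<Sum>s\<in>C. if s = s0 then F i j s else 0) else 0) else 0)"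
    by (auto intro!: sum.cong sum.neutral)
  also have "\<dots> = F i0 j0 s0" using assms by simp
  finally show ?thesis .
qed

lemma lfam_expand:
  assumes L: "L \<in> Lidx p R"
  shows "Lfam x a L = (\<Sum>i<p. \<Sum>j<p. \<Sum>s\<in>Sidx R. if sel L i j s then Sfam a s * x i * x j else 0)"
proof -
  obtain i0 j0 s0 where k: "key L = (i0, j0, s0)" by (cases "key L") auto
  have p: "i0 < p" "j0 < p" "s0 \<in> Sidx R" using key_props[OF L k] by auto
  have "(\<Sum>i<p. \<Sum>j<p. \<Sum>s\<in>Sidx R. if sel L i j s then Sfam a s * x i * x j else 0)
     = (\<Sum>i<p. \<Sum>j<p. \<Sum>s\<in>Sidx R. if (i, j, s) = (i0, j0, s0) then Sfam a s * x i * x j else 0)"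
    using sel_key[OF L] k by simp
  also have "\<dots> = Sfam a s0 * x i0 * x j0"
    by (rule delta3) (use p finite_Sidx in auto)
  also have "\<dots> = Lfam x a L"
    using k L by (cases L) (auto simp: power2_eq_square)
  finally show ?thesis by simp
qed

definition rr :: "(lidx \<Rightarrow> real) \<Rightarrow> nat \<Rightarrow> nat \<Rightarrow> nat \<Rightarrow> nat \<Rightarrow> sidx \<Rightarrow> real" where
  "rr q p R i j s = (\<Sum>L\<in>Lidx p R. if sel L i j s then q L else 0)"

definition cc :: "(lidx \<Rightarrow> real) \<Rightarrow> (nat \<Rightarrow> complex) \<Rightarrow> nat \<Rightarrow> nat \<Rightarrow> nat \<Rightarrow> nat \<Rightarrow> real" where
  "cc q a p R i j = (\<Sum>s\<in>Sidx R. rr q p R i j s * Sfam a s)"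

lemma g_expand:
  "(\<Sum>L\<in>Lidx p R. q L * Lfam x a L) = (\<Sum>i<p. \<Sum>j<p. cc q a p R i j * x i * x j)"
proof -
  define G where "G L i j s = (if sel L i j s then q L * Sfam a s * x i * x j else 0)" for L i j s
  have "(\<Sum>L\<in>Lidx p R. q L * Lfam x a L) = (\<Sum>L\<in>Lidx p R. \<Sum>i<p. \<Sum>j<p. \<Sum>s\<in>Sidx R. G L i j s)"
    by (intro sum.cong refl) (auto simp: lfam_expand G_def sum_distrib_left mult.assoc intro!: sum.cong)
  also have "\<dots> = (\<Sum>i<p. \<Sum>L\<in>Lidx p R. \<Sum>j<p. \<Sum>s\<in>Sidx R. G L i j s)"
    by (rule sum.swap)
  also have "\<dots> = (\<Sum>i<p. \<Sum>j<p. \<Sum>L\<in>Lidx p R. \<Sum>s\<in>Sidx R. G L i j s)"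
    by (intro sum.cong refl sum.swap)
  also have "\<dots> = (\<Sum>i<p. \<Sum>j<p. \<Sum>s\<in>Sidx R. \<Sum>L\<in>Lidx p R. G L i j s)"
    by (intro sum.cong refl sum.swap)
  also have "\<dots> = (\<Sum>i<p. \<Sum>j<p. cc q a p R i j * x i * x j)"
    by (intro sum.cong refl)
       (auto simp: cc_def rr_def G_def sum_distrib_right intro!: sum.cong)
  finally show ?thesis .
qed

lemma rr_key:
  assumes L0: "L0 \<in> Lidx p R" and k: "key L0 = (i0, j0, s0)"
  shows "rr q p R i0 j0 s0 = q L0"
proof -
  have "rr q p R i0 j0 s0 = (\<Sum>L\<in>Lidx p R. if L = L0 then q L else 0)"
    unfolding rr_def
  proof (intro sum.cong refl)
    fix L assume L: "L \<in> Lidx p R"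
    have "sel L i0 j0 s0 \<longleftrightarrow> L = L0"
      using sel_key[OF L] key_inj[OF L L0] k by auto
    then show "(if sel L i0 j0 s0 then q L else 0) = (if L = L0 then q L else 0)" by simp
  qed
  also have "\<dots> = q L0" using L0 finite_Lidx by simp
  finally show ?thesis .
qed

lemma rr_lower:
  assumes "j < i"
  shows "rr q p R i j s = 0"
  unfolding rr_def
proof (intro sum.neutral ballI)
  fix L assume L: "L \<in> Lidx p R"
  show "(if sel L i j s then q L else 0) = 0"
  proof (cases "sel L i j s")
    case True
    then have "key L = (i, j, s)" using sel_key[OF L] by simp
    then have "i \<le> j" using key_props[OF L] by simp
    then show ?thesis using assms by simp
  qed simp
qed

lemma cc_nonzero:
  assumes S: "rat_indep (Sidx R) (Sfam a)"
    and q: "\<forall>L\<in>Lidx p R. q L \<in> \<rat>" and L0: "L0 \<in> Lidx p R" and qL0: "q L0 \<noteq> 0"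
  shows "(\<exists>i\<in>{..<p}. cc q a p R i i \<noteq> 0) \<or>
         (\<exists>i\<in>{..<p}. \<exists>j\<in>{..<p}. i \<noteq> j \<and> cc q a p R i j + cc q a p R j i \<noteq> 0)"
proof -
  obtain i0 j0 s0 where k: "key L0 = (i0, j0, s0)" by (cases "key L0") auto
  note kp = key_props[OF L0 k]
  have rk: "rr q p R i0 j0 s0 = q L0" by (rule rr_key[OF L0 k])
  have rat: "\<forall>s\<in>Sidx R. rr q p R i0 j0 s \<in> \<rat>"
    using q unfolding rr_def by (auto intro!: Rats_sum)
  have c: "cc q a p R i0 j0 \<noteq> 0"
  proof
    assume "cc q a p R i0 j0 = 0"
    then have "\<forall>s\<in>Sidx R. rr q p R i0 j0 s = 0"
      using S rat unfolding rat_indep_def cc_def by blast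
    then show False using kp(3) rk qL0 by auto
  qed
  show ?thesis
  proof (cases "i0 = j0")
    case True
    then show ?thesis using c kp by auto
  next
    case False
    then have "i0 < j0" using kp by simp
    then have "cc q a p R j0 i0 = 0" by (simp add: cc_def rr_lower)
    then show ?thesis using c kp False by (intro disjI2 bexI[of _ i0] bexI[of _ j0]) auto
  qed
qed

theorem lemma6:
  fixes M :: "'a measure" and X :: "nat \<Rightarrow> 'a \<Rightarrow> real"
    and f :: "(nat \<Rightarrow> real) \<Rightarrow> ennreal"
    and a :: "nat \<Rightarrow> complex" and p R :: nat
  assumes "prob_space M"
    and "distributed M (PiM {..<p} (\<lambda>_. lborel)) (\<lambda>\<omega>. \<lambda>i\<in>{..<p}. X i \<omega>) f"
    and "rat_indep (Sidx R) (Sfam a)"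
  shows "measure M {\<omega> \<in> space M. rat_indep (Lidx p R) (Lfam (\<lambda>i. X i \<omega>) a)} = 1"
proof -
  interpret prob_space M by fact
  let ?Xt = "\<lambda>\<omega>. \<lambda>i\<in>{..<p}. X i \<omega>"
  note d = assms(2)
  have Xm: "?Xt \<in> measurable M (PL {..<p})" using d by (simp add: distributed_def)
  have Xi[measurable]: "(\<lambda>\<omega>. ?Xt \<omega> i) \<in> borel_measurable M" for i
  proof (cases "i < p")
    case True
    then show ?thesis using measurable_compose[OF Xm measurable_component_singleton[of i "{..<p}" "\<lambda>_. lborel"]]
      by simp
  qed simp
  let ?Q = "PiE (Lidx p R) (\<lambda>_. \<rat> :: real set)"
  have cQ: "countable ?Q" by (intro countable_PiE finite_Lidx countable_rat)
  have lf: "Lfam (\<lambda>i. X i \<omega>) a L = Lfam (?Xt \<omega>) a L" if "L \<in> Lidx p R" for \<omega> L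
    using that by (cases L) (auto simp: Lidx_def)
  have ri: "rat_indep (Lidx p R) h \<longleftrightarrow>
      (\<forall>q\<in>?Q. (\<Sum>L\<in>Lidx p R. q L * h L) = 0 \<longrightarrow> (\<forall>L\<in>Lidx p R. q L = 0))" for h
  proof
    assume "rat_indep (Lidx p R) h"
    then show "\<forall>q\<in>?Q. (\<Sum>L\<in>Lidx p R. q L * h L) = 0 \<longrightarrow> (\<forall>L\<in>Lidx p R. q L = 0)"
      unfolding rat_indep_def by (auto simp: PiE_iff)
  next
    assume H: "\<forall>q\<in>?Q. (\<Sum>L\<in>Lidx p R. q L * h L) = 0 \<longrightarrow> (\<forall>L\<in>Lidx p R. q L = 0)"
    show "rat_indep (Lidx p R) h"
      unfolding rat_indep_def
    proof (intro allI impI)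
      fix q :: "lidx \<Rightarrow> real"
      assume qr: "\<forall>k\<in>Lidx p R. q k \<in> \<rat>" and s0: "(\<Sum>k\<in>Lidx p R. q k * h k) = 0"
      have "restrict q (Lidx p R) \<in> ?Q" using qr by auto
      moreover have "(\<Sum>L\<in>Lidx p R. restrict q (Lidx p R) L * h L) = 0"
        using s0 by simp
      ultimately have "\<forall>L\<in>Lidx p R. restrict q (Lidx p R) L = 0" using H by blast
      then show "\<forall>k\<in>Lidx p R. q k = 0" by simp
    qed
  qed
  define g where "g q \<omega> = (\<Sum>i<p. \<Sum>j<p. cc q a p R i j * ?Xt \<omega> i * ?Xt \<omega> j)" for q \<omega>
  have set_eq: "{\<omega> \<in> space M. rat_indep (Lidx p R) (Lfam (\<lambda>i. X i \<omega>) a)}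
     = {\<omega> \<in> space M. \<forall>q\<in>?Q. g q \<omega> = 0 \<longrightarrow> (\<forall>L\<in>Lidx p R. q L = 0)}"
  proof -
    have "(\<Sum>L\<in>Lidx p R. q L * Lfam (\<lambda>i. X i \<omega>) a L) = g q \<omega>" for q \<omega>
    proof -
      have "(\<Sum>L\<in>Lidx p R. q L * Lfam (\<lambda>i. X i \<omega>) a L) = (\<Sum>L\<in>Lidx p R. q L * Lfam (?Xt \<omega>) a L)"
        by (intro sum.cong refl) (simp add: lf)
      also have "\<dots> = g q \<omega>" unfolding g_def by (rule g_expand)
      finally show ?thesis .
    qed
    then show ?thesis by (simp add: ri)
  qed
  have gm[measurable]: "g q \<in> borel_measurable M" for q unfolding g_def by measurable
  have meas: "{\<omega> \<in> space M. \<forall>q\<in>?Q. g q \<omega> = 0 \<longrightarrow> (\<forall>L\<in>Lidx p R. q L = 0)} \<in> sets M"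
  proof -
    have ne: "?Q \<noteq> {}" using PiE_eq_empty_iff[of "Lidx p R" "\<lambda>_. \<rat>"] by auto
    have "{\<omega> \<in> space M. \<forall>q\<in>?Q. g q \<omega> = 0 \<longrightarrow> (\<forall>L\<in>Lidx p R. q L = 0)}
        = (\<Inter>q\<in>?Q. {\<omega> \<in> space M. g q \<omega> = 0 \<longrightarrow> (\<forall>L\<in>Lidx p R. q L = 0)})"
      using ne by auto
    also have "\<dots> \<in> sets M"
      by (rule sets.countable_INT'[OF cQ ne]) auto
    finally show ?thesis .
  qed
  have ae: "AE \<omega> in M. \<forall>q\<in>?Q. g q \<omega> = 0 \<longrightarrow> (\<forall>L\<in>Lidx p R. q L = 0)"
  proof (subst AE_ball_countable[OF cQ], intro ballI)
    fix q assume qQ: "q \<in> ?Q"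
    show "AE \<omega> in M. g q \<omega> = 0 \<longrightarrow> (\<forall>L\<in>Lidx p R. q L = 0)"
    proof (cases "\<forall>L\<in>Lidx p R. q L = 0")
      case True
      then show ?thesis by simp
    next
      case False
      then obtain L0 where L0: "L0 \<in> Lidx p R" "q L0 \<noteq> 0" by blast
      have qr: "\<forall>L\<in>Lidx p R. q L \<in> \<rat>" using qQ by (auto simp: PiE_iff)
      have Z: "{x \<in> space (PL {..<p}). (\<Sum>k\<in>{..<p}. \<Sum>l\<in>{..<p}. cc q a p R k l * x k * x l) = 0}
           \<in> null_sets (PL {..<p})"
        by (rule quad_null) (use cc_nonzero[OF assms(3) qr L0] in auto)
      have "AE \<omega> in M. ?Xt \<omega> \<notin> {x \<in> space (PL {..<p}). (\<Sum>k\<in>{..<p}. \<Sum>l\<in>{..<p}. cc q a p R k l * x k * x l) = 0}"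
        by (rule dist_null[OF d Z])
      with AE_space show ?thesis
      proof eventually_elim
        case (elim \<omega>)
        note \<omega> = elim(1) and n = elim(2)
        have "?Xt \<omega> \<in> space (PL {..<p})" using measurable_space[OF Xm \<omega>] .
        with n have "g q \<omega> \<noteq> 0" unfolding g_def lessThan_def by blast
        then show "g q \<omega> = 0 \<longrightarrow> (\<forall>L\<in>Lidx p R. q L = 0)" by simp
      qed
    qed
  qed
  show ?thesis unfolding set_eq using prob_Collect_eq_1[OF meas] ae by simp
qed

end
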